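(* Consider the generalized trimmed lasso problem $$\min_{x_0,\ldots,x_L}\ f(x_0,\ldots,x_L)+\sum_{l=1}^L\gamma_l T_{K_l,m_l,p_l}(D_lx_l-c_l),$$ where $f:\mathbb{R}^{n_0+\cdots+n_L}\to\mathbb{R}$ is directionally differentiable and Lipschitz continuous with constant $M$ with respect to the $\ell_2$ norm, and suppose that for every $l\in[L]$ there is $\overline{x}_l$ with $D_l\overline{x}_l=c_l$. Then every d-stationary point $x^*$ satisfies $T_{K_l,m_l,p_l}(D_lx_l^*-c_l)=0$ for all $l\in[L]$ provided $\gamma_l>M/\sigma_{K_l,m_l,p_l}(D_l)$ for all $l\in[L]$. If moreover $p_l=1$, $D_l=I$, $c_l=0$ for all $l\in[L]$ and $f$ is Lipschitz continuous with constant $M'$ with respect to the $\ell_1$ norm, the threshold may be replaced by $\gamma_l>M'$.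
   Context: Trimmed $\ell_1$ norm: $T_{K,m,p}(z)=\min_{\Lambda\subset[m],|\Lambda|=m-K}\sum_{i\in\Lambda}\|z_i\|_2$ for $z=(z_1^\top,\ldots,z_m^\top)^\top$, $z_i\in\mathbb{R}^p$, $K\in\{0,\ldots,m-1\}$. Data: $n_0\ge0$, $\gamma_l>0$, $K_l\in\{0,\ldots,m_l-1\}$, $c_l\in\mathbb{R}^{m_lp_l}$, $D_l\ne0$ an $m_lp_l\times n_l$ matrix. d-stationary: directional derivative of the objective at $x^*$ is $\ge0$ in every direction. $\sigma_{\min}(A)$ = smallest nonzero singular value. For $D$ with $p\times n$ blocks and $(D)_\Lambda$ the submatrix of blocks indexed by $\Lambda$: $\sigma_{K,m,p}(D)=\sigma_{\min}(D)$ if $D$ is surjective, else $\min\{\sigma_{\min}((D)_\Lambda)\mid \Lambda\subset[m],|\Lambda|=m-K,(D)_\Lambda\ne0\}$. *)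

theory Defs
  imports "HOL-Analysis.Analysis"
begin

text \<open>A point x = (x_0,...,x_L) is represented as
  x :: nat => nat => real, where x l i is coordinate i (0-based, i < n l) of block l.
  The ambient space is the set of such functions vanishing outside the index range.
  A matrix with R rows and n columns is a function A :: nat => nat => real
  (A r j, r < R, j < n).  [m] is rendered 0-based as {..<m}; block i of a vector
  z in R^(m p) consists of the entries z (i*p + k), k < p.\<close>

definition point_space :: "nat \<Rightarrow> (nat \<Rightarrow> nat) \<Rightarrow> (nat \<Rightarrow> nat \<Rightarrow> real) set" where
  "point_space L n = {x. \<forall>l i. (L < l \<or> n l \<le> i) \<longrightarrow> x l i = 0}"

definition norm2_pt :: "nat \<Rightarrow> (nat \<Rightarrow> nat) \<Rightarrow> (nat \<Rightarrow> nat \<Rightarrow> real) \<Rightarrow> real" where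
  "norm2_pt L n x = sqrt (\<Sum>l\<le>L. \<Sum>i<n l. (x l i)\<^sup>2)"

definition norm1_pt :: "nat \<Rightarrow> (nat \<Rightarrow> nat) \<Rightarrow> (nat \<Rightarrow> nat \<Rightarrow> real) \<Rightarrow> real" where
  "norm1_pt L n x = (\<Sum>l\<le>L. \<Sum>i<n l. \<bar>x l i\<bar>)"

definition diff_pt :: "(nat \<Rightarrow> nat \<Rightarrow> real) \<Rightarrow> (nat \<Rightarrow> nat \<Rightarrow> real) \<Rightarrow> (nat \<Rightarrow> nat \<Rightarrow> real)" where
  "diff_pt x y = (\<lambda>l i. x l i - y l i)"

definition has_dir_deriv ::
  "((nat \<Rightarrow> nat \<Rightarrow> real) \<Rightarrow> real) \<Rightarrow> (nat \<Rightarrow> nat \<Rightarrow> real) \<Rightarrow> (nat \<Rightarrow> nat \<Rightarrow> real) \<Rightarrow> real \<Rightarrow> bool" where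
  "has_dir_deriv F x d Dv \<longleftrightarrow>
     ((\<lambda>t. (F (\<lambda>l i. x l i + t * d l i) - F x) / t) \<longlongrightarrow> Dv) (at_right 0)"

definition dir_differentiable ::
  "nat \<Rightarrow> (nat \<Rightarrow> nat) \<Rightarrow> ((nat \<Rightarrow> nat \<Rightarrow> real) \<Rightarrow> real) \<Rightarrow> bool" where
  "dir_differentiable L n F \<longleftrightarrow>
     (\<forall>x\<in>point_space L n. \<forall>d\<in>point_space L n. \<exists>Dv. has_dir_deriv F x d Dv)"

definition d_stationary ::
  "nat \<Rightarrow> (nat \<Rightarrow> nat) \<Rightarrow> ((nat \<Rightarrow> nat \<Rightarrow> real) \<Rightarrow> real) \<Rightarrow> (nat \<Rightarrow> nat \<Rightarrow> real) \<Rightarrow> bool" where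
  "d_stationary L n F x \<longleftrightarrow> x \<in> point_space L n \<and>
     (\<forall>d\<in>point_space L n. \<exists>Dv. has_dir_deriv F x d Dv \<and> Dv \<ge> 0)"

definition block_norm :: "nat \<Rightarrow> (nat \<Rightarrow> real) \<Rightarrow> nat \<Rightarrow> real" where
  "block_norm p z i = L2_set (\<lambda>k. z (i * p + k)) {..<p}"

definition trimmed :: "nat \<Rightarrow> nat \<Rightarrow> nat \<Rightarrow> (nat \<Rightarrow> real) \<Rightarrow> real" where
  "trimmed K m p z =
     Min ((\<lambda>\<Lambda>. \<Sum>i\<in>\<Lambda>. block_norm p z i) ` {\<Lambda>. \<Lambda> \<subseteq> {..<m} \<and> card \<Lambda> = m - K})"

definition resid :: "nat \<Rightarrow> (nat \<Rightarrow> nat \<Rightarrow> real) \<Rightarrow> (nat \<Rightarrow> real) \<Rightarrow> (nat \<Rightarrow> real) \<Rightarrow> (nat \<Rightarrow> real)" where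
  "resid n D c x = (\<lambda>r. (\<Sum>j<n. D r j * x j) - c r)"

definition objective ::
  "nat \<Rightarrow> (nat \<Rightarrow> nat) \<Rightarrow> (nat \<Rightarrow> nat) \<Rightarrow> (nat \<Rightarrow> nat) \<Rightarrow> (nat \<Rightarrow> nat) \<Rightarrow> (nat \<Rightarrow> real)
   \<Rightarrow> (nat \<Rightarrow> nat \<Rightarrow> real) \<Rightarrow> (nat \<Rightarrow> nat \<Rightarrow> nat \<Rightarrow> real)
   \<Rightarrow> ((nat \<Rightarrow> nat \<Rightarrow> real) \<Rightarrow> real) \<Rightarrow> (nat \<Rightarrow> nat \<Rightarrow> real) \<Rightarrow> real" where
  "objective L n m p K \<gamma> c D f x =
     f x + (\<Sum>l=1..L. \<gamma> l * trimmed (K l) (m l) (p l) (resid (n l) (D l) (c l) (x l)))"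

text \<open>Singular values of the submatrix of A (n columns) formed by the rows in R:
  sigma is a nonzero singular value iff sigma > 0 and sigma^2 is an eigenvalue of A_R^T A_R.\<close>
definition nz_sing_vals :: "nat set \<Rightarrow> nat \<Rightarrow> (nat \<Rightarrow> nat \<Rightarrow> real) \<Rightarrow> real set" where
  "nz_sing_vals R n A = {\<sigma>. \<sigma> > 0 \<and> (\<exists>v. (\<exists>j<n. v j \<noteq> 0) \<and>
      (\<forall>j<n. (\<Sum>r\<in>R. A r j * (\<Sum>k<n. A r k * v k)) = \<sigma>\<^sup>2 * v j))}"

definition sigma_min :: "nat set \<Rightarrow> nat \<Rightarrow> (nat \<Rightarrow> nat \<Rightarrow> real) \<Rightarrow> real" where
  "sigma_min R n A = Min (nz_sing_vals R n A)"

definition mat_surj :: "nat \<Rightarrow> nat \<Rightarrow> (nat \<Rightarrow> nat \<Rightarrow> real) \<Rightarrow> bool" where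
  "mat_surj Rn n A \<longleftrightarrow> (\<forall>y. \<exists>v. \<forall>r<Rn. (\<Sum>j<n. A r j * v j) = y r)"

definition block_rows :: "nat \<Rightarrow> nat set \<Rightarrow> nat set" where
  "block_rows p \<Lambda> = {r. \<exists>i\<in>\<Lambda>. \<exists>k<p. r = i * p + k}"

definition sigma_K :: "nat \<Rightarrow> nat \<Rightarrow> nat \<Rightarrow> nat \<Rightarrow> (nat \<Rightarrow> nat \<Rightarrow> real) \<Rightarrow> real" where
  "sigma_K K m p n A =
     (if mat_surj (m * p) n A then sigma_min {..<m * p} n A
      else Min {sigma_min (block_rows p \<Lambda>) n A | \<Lambda>.
                  \<Lambda> \<subseteq> {..<m} \<and> card \<Lambda> = m - K \<and>
                  (\<exists>r\<in>block_rows p \<Lambda>. \<exists>j<n. A r j \<noteq> 0)})"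

end

theory Submission
  imports Defs "Jordan_Normal_Form.Char_Poly"
begin

lemma quad_zero:
  fixes a b :: real
  assumes "\<forall>t. 0 \<le> 2*t*a + t^2*b"
  shows "a = 0"
proof (rule ccontr)
  assume a: "a \<noteq> 0"
  define s where "s = 1/(\<bar>b\<bar>+1)"
  have s: "s > 0" "s * \<bar>b\<bar> < 1" unfolding s_def by (auto simp: field_simps)
  have "0 \<le> 2*(-a * s)*a + (-a * s)^2*b" using assms by blast
  also have "\<dots> = a^2 * s * (s*b - 2)" by (simp add: power2_eq_square algebra_simps)
  also have "\<dots> < 0"
  proof -
    have "s*b - 2 < 0" using s by (smt (verit) abs_ge_self mult_left_mono)
    moreover have "a^2 * s > 0" using a s by simp
    ultimately show ?thesis by (simp add: mult_pos_neg)
  qed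
  finally show False by simp
qed

lemma fin_nz: "finite (nz_sing_vals R n A)"
proof -
  define B where "B = Matrix.mat n n (\<lambda>(i,j). \<Sum>r\<in>R. A r i * A r j)"
  have Bc: "B \<in> carrier_mat n n" unfolding B_def by simp
  have ne: "char_poly B \<noteq> 0" using degree_monic_char_poly[OF Bc] by auto
  have "nz_sing_vals R n A \<subseteq> sqrt ` {x. poly (char_poly B) x = 0}"
  proof
    fix \<sigma> assume "\<sigma> \<in> nz_sing_vals R n A"
    then obtain v where s: "\<sigma> > 0" and v: "\<exists>j<n. v j \<noteq> 0"
      and ev: "\<forall>j<n. (\<Sum>r\<in>R. A r j * (\<Sum>k<n. A r k * v k)) = \<sigma>\<^sup>2 * v j"
      unfolding nz_sing_vals_def by auto
    have "eigenvalue B (\<sigma>\<^sup>2)"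
      unfolding eigenvalue_def eigenvector_def
    proof (intro exI conjI)
      show "Matrix.vec n v \<in> carrier_vec (dim_row B)" using Bc by simp
      show "Matrix.vec n v \<noteq> 0\<^sub>v (dim_row B)" using v Bc
        by (metis carrier_matD(1) index_vec index_zero_vec(1))
      show "B *\<^sub>v Matrix.vec n v = \<sigma>\<^sup>2 \<cdot>\<^sub>v Matrix.vec n v"
      proof (rule eq_vecI)
        fix i assume i: "i < dim_vec (\<sigma>\<^sup>2 \<cdot>\<^sub>v Matrix.vec n v)"
        hence i': "i < n" by simp
        have "(B *\<^sub>v Matrix.vec n v) $ i = (\<Sum>k<n. (\<Sum>r\<in>R. A r i * A r k) * v k)"
          using i' unfolding B_def by (simp add: scalar_prod_def lessThan_atLeast0)
        also have "\<dots> = (\<Sum>r\<in>R. A r i * (\<Sum>k<n. A r k * v k))"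
          by (simp add: sum_distrib_left sum_distrib_right mult.assoc sum.swap[of _ R])
        also have "\<dots> = \<sigma>\<^sup>2 * v i" using ev i' by simp
        finally show "(B *\<^sub>v Matrix.vec n v) $ i = (\<sigma>\<^sup>2 \<cdot>\<^sub>v Matrix.vec n v) $ i"
          using i' by simp
      qed (simp add: B_def)
    qed
    hence "poly (char_poly B) (\<sigma>\<^sup>2) = 0" using eigenvalue_root_char_poly[OF Bc] by simp
    moreover have "\<sigma> = sqrt (\<sigma>\<^sup>2)" using s by simp
    ultimately show "\<sigma> \<in> sqrt ` {x. poly (char_poly B) x = 0}" by blast
  qed
  thus ?thesis using poly_roots_finite[OF ne] finite_subset by blast
qed

definition av :: "(nat \<Rightarrow> nat \<Rightarrow> real) \<Rightarrow> nat \<Rightarrow> (nat \<Rightarrow> real) \<Rightarrow> nat \<Rightarrow> real" where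
  "av A n v r = (\<Sum>j<n. A r j * v j)"

definition ipn :: "nat \<Rightarrow> (nat \<Rightarrow> real) \<Rightarrow> (nat \<Rightarrow> real) \<Rightarrow> real" where
  "ipn n u v = (\<Sum>j<n. u j * v j)"

abbreviation PT :: "nat \<Rightarrow> (nat \<Rightarrow> real) topology" where
  "PT n \<equiv> product_topology (\<lambda>_. euclideanreal) {..<n}"

lemma cont_proj: "j < n \<Longrightarrow> continuous_map (PT n) euclideanreal (\<lambda>u. u j)"
  using continuous_map_product_projection[of j "{..<n}" "\<lambda>_. euclideanreal"] by simp

lemma cont_ipn: "continuous_map (PT n) euclideanreal (\<lambda>u. ipn n u (k u))"
  if "\<And>j. j < n \<Longrightarrow> continuous_map (PT n) euclideanreal (\<lambda>u. k u j)"
  unfolding ipn_def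
proof (rule continuous_map_sum)
  fix j assume "j \<in> {..<n}"
  thus "continuous_map (PT n) euclideanreal (\<lambda>u. u j * k u j)"
    using continuous_map_real_mult[OF cont_proj that] by auto
qed simp

lemma cont_av: "continuous_map (PT n) euclideanreal (\<lambda>u. av A n u r)"
  unfolding av_def
proof (rule continuous_map_sum)
  fix j assume "j \<in> {..<n}"
  thus "continuous_map (PT n) euclideanreal (\<lambda>u. A r j * u j)"
    using continuous_map_real_mult[OF continuous_map_const[THEN iffD2] cont_proj] by auto
qed simp

lemma attain_min:
  assumes g: "continuous_map (PT n) euclideanreal g"
    and C: "closedin (PT n) C" "C \<subseteq> PiE {..<n} (\<lambda>_. {-\<rho>..\<rho>})" "C \<noteq> {}"
  shows "\<exists>u\<in>C. \<forall>v\<in>C. g u \<le> g v"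
proof -
  have c1: "compactin euclideanreal {-\<rho>..\<rho>}" unfolding compactin_euclidean_iff by (rule compact_Icc)
  have "compactin (PT n) (PiE {..<n} (\<lambda>_. {-\<rho>..\<rho>}))"
    unfolding compactin_PiE using c1 by blast
  hence "compactin (PT n) C" using closed_compactin C(1) C(2) by metis
  hence "compactin euclideanreal (g ` C)" using image_compactin g by metis
  hence cc: "compact (g ` C)" unfolding compactin_euclidean_iff .
  have "g ` C \<noteq> {}" using C(3) by simp
  then obtain s where "s \<in> g ` C" "\<forall>t\<in>g ` C. s \<le> t" using compact_attains_inf[OF cc] by metis
  thus ?thesis by auto
qed


lemma ipn_nonneg: "0 \<le> ipn n u u"
  unfolding ipn_def by (intro sum_nonneg) auto

lemma ipn_zero: "ipn n u u = 0 \<Longrightarrow> j < n \<Longrightarrow> u j = 0"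
  unfolding ipn_def using sum_nonneg_eq_0_iff[of "{..<n}" "\<lambda>j. u j * u j"] by auto

lemma abs_le_ipn: "j < n \<Longrightarrow> \<bar>u j\<bar> \<le> sqrt (ipn n u u)"
proof -
  assume j: "j < n"
  have "u j * u j \<le> ipn n u u" unfolding ipn_def
    using member_le_sum[of j "{..<n}" "\<lambda>j. u j * u j"] j by auto
  hence "sqrt (u j * u j) \<le> sqrt (ipn n u u)" by (rule real_sqrt_le_mono)
  thus ?thesis by (simp add: real_sqrt_mult_self)
qed

lemma ipn_cong: "(\<And>j. j < n \<Longrightarrow> u j = u' j) \<Longrightarrow> (\<And>j. j < n \<Longrightarrow> v j = v' j) \<Longrightarrow> ipn n u v = ipn n u' v'"
  unfolding ipn_def by (intro sum.cong) auto

lemma av_cong: "(\<And>j. j < n \<Longrightarrow> u j = u' j) \<Longrightarrow> av A n u r = av A n u' r"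
  unfolding av_def by (intro sum.cong) auto

lemma ipn_sym: "ipn n u v = ipn n v u"
  unfolding ipn_def by (simp add: mult.commute)

lemma ipn_lin: "ipn n (\<lambda>j. a j + t * b j) k = ipn n a k + t * ipn n b k"
  unfolding ipn_def by (simp add: algebra_simps sum.distrib sum_distrib_left)

lemma ipn_scale: "ipn n (\<lambda>j. c * a j) k = c * ipn n a k"
  unfolding ipn_def by (simp add: algebra_simps sum_distrib_left)

lemma ipn_scale2: "ipn n a (\<lambda>j. c * b j) = c * ipn n a b"
  unfolding ipn_def by (simp add: algebra_simps sum_distrib_left)

lemma ipn_sq: "ipn n (\<lambda>j. a j + t * b j) (\<lambda>j. a j + t * b j) = ipn n a a + 2*t*ipn n a b + t^2 * ipn n b b"
  unfolding ipn_def by (simp add: algebra_simps power2_eq_square sum.distrib sum_distrib_left)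

lemma av_lin: "av A n (\<lambda>j. a j + t * b j) r = av A n a r + t * av A n b r"
  unfolding av_def by (simp add: algebra_simps sum.distrib sum_distrib_left)

lemma av_scale: "av A n (\<lambda>j. c * a j) r = c * av A n a r"
  unfolding av_def by (simp add: algebra_simps sum_distrib_left)

lemma q_sq: "(\<Sum>r\<in>R. (av A n (\<lambda>j. a j + t * b j) r)\<^sup>2) =
   (\<Sum>r\<in>R. (av A n a r)\<^sup>2) + 2*t*(\<Sum>r\<in>R. av A n a r * av A n b r) + t^2 * (\<Sum>r\<in>R. (av A n b r)\<^sup>2)"
  unfolding av_lin by (simp add: algebra_simps power2_eq_square sum.distrib sum_distrib_left)

lemma swap_av: "(\<Sum>r\<in>R. av A n v r * av A n u r) = ipn n (\<lambda>j. \<Sum>r\<in>R. A r j * av A n v r) u"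
  unfolding ipn_def av_def
  apply (simp add: sum_distrib_left sum_distrib_right sum.swap[of _ R] algebra_simps)
  apply (rule sum.cong[OF refl])
  apply (subst sum.swap)
  apply (simp add: algebra_simps)
  done


lemma cont_q: "finite R \<Longrightarrow> continuous_map (PT n) euclideanreal (\<lambda>u. \<Sum>r\<in>R. (av A n u r - c r)\<^sup>2)"
proof (rule continuous_map_sum)
  fix r
  have h: "continuous_map (PT n) euclideanreal (\<lambda>u. av A n u r - c r)"
    by (rule continuous_map_diff[OF cont_av]) (simp add: continuous_map_const)
  show "continuous_map (PT n) euclideanreal (\<lambda>u. (av A n u r - c r)\<^sup>2)"
    unfolding power2_eq_square by (rule continuous_map_real_mult[OF h h])
qed

lemma restrict_in_top: "restrict u {..<n} \<in> topspace (PT n)"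
  by (simp add: topspace_product_topology)

lemma LA:
  assumes finR: "finite R"
  shows "\<exists>d. (\<forall>r\<in>R. av A n d r = av A n w r) \<and>
     ((\<exists>r\<in>R. av A n w r \<noteq> 0) \<longrightarrow> nz_sing_vals R n A \<noteq> {} \<and>
        sigma_min R n A * sqrt (ipn n d d) \<le> sqrt (\<Sum>r\<in>R. (av A n d r)\<^sup>2))"
proof -
  define C1 where "C1 = {d \<in> topspace (PT n). (\<Sum>r\<in>R. (av A n d r - av A n w r)\<^sup>2) \<in> {0}}
     \<inter> {d \<in> topspace (PT n). ipn n d d \<in> {..ipn n w w}}"
  have cl1: "closedin (PT n) C1" unfolding C1_def
  proof (intro closedin_Int closedin_continuous_map_preimage)
    show "continuous_map (PT n) euclideanreal (\<lambda>d. \<Sum>r\<in>R. (av A n d r - av A n w r)\<^sup>2)"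
      by (rule cont_q[OF finR])
    show "continuous_map (PT n) euclideanreal (\<lambda>d. ipn n d d)"
      by (rule cont_ipn[where k="\<lambda>d. d", simplified], rule cont_proj)
  qed auto
  have box1: "C1 \<subseteq> PiE {..<n} (\<lambda>_. {-sqrt (ipn n w w)..sqrt (ipn n w w)})"
  proof
    fix d assume d: "d \<in> C1"
    hence "d \<in> PiE {..<n} (\<lambda>_. UNIV)" unfolding C1_def by (simp add: topspace_product_topology)
    moreover have "\<forall>j<n. \<bar>d j\<bar> \<le> sqrt (ipn n w w)"
      using d abs_le_ipn[of _ n d] real_sqrt_le_mono[of "ipn n d d" "ipn n w w"] unfolding C1_def
      by (smt (verit) Int_iff atMost_iff mem_Collect_eq)
    ultimately show "d \<in> PiE {..<n} (\<lambda>_. {-sqrt (ipn n w w)..sqrt (ipn n w w)})"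
      by (auto simp: PiE_iff abs_le_iff)
  qed
  have w1: "restrict w {..<n} \<in> C1" unfolding C1_def
  proof (intro IntI CollectI conjI restrict_in_top)
    have "av A n (restrict w {..<n}) r = av A n w r" for r by (rule av_cong) simp
    thus "(\<Sum>r\<in>R. (av A n (restrict w {..<n}) r - av A n w r)\<^sup>2) \<in> {0}" by simp
    have "ipn n (restrict w {..<n}) (restrict w {..<n}) = ipn n w w" by (rule ipn_cong) auto
    thus "ipn n (restrict w {..<n}) (restrict w {..<n}) \<in> {..ipn n w w}" by simp
  qed
  obtain d where dC: "d \<in> C1" and dmin: "\<forall>v\<in>C1. ipn n d d \<le> ipn n v v"
    using attain_min[OF cont_ipn[where k="\<lambda>d. d", OF cont_proj] cl1 box1] w1 by blast
  have dA: "\<forall>r\<in>R. av A n d r = av A n w r"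
  proof -
    have "(\<Sum>r\<in>R. (av A n d r - av A n w r)\<^sup>2) = 0" using dC unfolding C1_def by simp
    hence "\<forall>r\<in>R. (av A n d r - av A n w r)\<^sup>2 = 0"
      using sum_nonneg_eq_0_iff[OF finR, of "\<lambda>r. (av A n d r - av A n w r)\<^sup>2"] by simp
    thus ?thesis by simp
  qed
  have dtop: "d \<in> topspace (PT n)" and dle: "ipn n d d \<le> ipn n w w" using dC unfolding C1_def by auto
  have dorth: "ipn n d k = 0" if k: "\<forall>r\<in>R. av A n k r = 0" for k
  proof (rule ccontr)
    assume ne: "ipn n d k \<noteq> 0"
    have kpos: "ipn n k k > 0"
    proof -
      have "ipn n k k \<noteq> 0"
      proof
        assume "ipn n k k = 0"
        hence "\<forall>j<n. k j = 0" using ipn_zero by blast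
        hence "ipn n d k = 0" unfolding ipn_def by simp
        with ne show False by simp
      qed
      thus ?thesis using ipn_nonneg[of n k] by simp
    qed
    define t where "t = - ipn n d k / ipn n k k"
    define d' where "d' = restrict (\<lambda>j. d j + t * k j) {..<n}"
    have e1: "ipn n d' d' = ipn n d d + 2*t*ipn n d k + t^2 * ipn n k k"
      unfolding d'_def ipn_sq[symmetric] by (rule ipn_cong) auto
    have "2*t*ipn n d k + t^2 * ipn n k k = - ((ipn n d k)\<^sup>2 / ipn n k k)"
      unfolding t_def using kpos by (simp add: field_simps power2_eq_square)
    moreover have "(ipn n d k)\<^sup>2 / ipn n k k > 0" using ne kpos by simp
    ultimately have lt: "ipn n d' d' < ipn n d d" using e1 by simp
    have "d' \<in> C1" unfolding C1_def
    proof (intro IntI CollectI conjI)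
      show "d' \<in> topspace (PT n)" unfolding d'_def by (rule restrict_in_top)
      have "av A n d' r = av A n d r + t * av A n k r" for r
        unfolding d'_def av_lin[symmetric] by (rule av_cong) simp
      hence "av A n d' r = av A n w r" if "r \<in> R" for r using that k dA by simp
      thus "(\<Sum>r\<in>R. (av A n d' r - av A n w r)\<^sup>2) \<in> {0}" by simp
      show "ipn n d' d' \<in> {..ipn n w w}" using lt dle by simp
    qed (unfold d'_def, rule restrict_in_top)
    with dmin lt show False by force
  qed
  have part2: "nz_sing_vals R n A \<noteq> {} \<and> sigma_min R n A * sqrt (ipn n d d) \<le> sqrt (\<Sum>r\<in>R. (av A n d r)\<^sup>2)"
    if ex: "\<exists>r\<in>R. av A n w r \<noteq> 0"
  proof -
    define ker where "ker = {k. \<forall>r\<in>R. av A n k r = 0}"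
    define q where "q = (\<lambda>u. \<Sum>r\<in>R. (av A n u r)\<^sup>2)"
    have dpos: "ipn n d d > 0"
    proof -
      have "ipn n d d \<noteq> 0"
      proof
        assume "ipn n d d = 0"
        hence "\<forall>j<n. d j = 0" using ipn_zero by blast
        hence "\<forall>r. av A n d r = 0" unfolding av_def by simp
        with ex dA show False by auto
      qed
      thus ?thesis using ipn_nonneg[of n d] by simp
    qed
    define C2 where "C2 = {u \<in> topspace (PT n). ipn n u u \<in> {1}} \<inter>
       \<Inter> ((\<lambda>k. {u \<in> topspace (PT n). ipn n u k \<in> {0}}) ` ker)"
    have "(\<lambda>_. 0) \<in> ker" unfolding ker_def av_def by simp
    hence kerne: "ker \<noteq> {}" by blast
    have cl2: "closedin (PT n) C2" unfolding C2_def
    proof (intro closedin_Int closedin_Inter)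
      show "closedin (PT n) {u \<in> topspace (PT n). ipn n u u \<in> {1}}"
        by (rule closedin_continuous_map_preimage[OF cont_ipn[where k="\<lambda>d. d", OF cont_proj]]) auto
      show "(\<lambda>k. {u \<in> topspace (PT n). ipn n u k \<in> {0}}) ` ker \<noteq> {}" using kerne by simp
      fix S assume "S \<in> (\<lambda>k. {u \<in> topspace (PT n). ipn n u k \<in> {0}}) ` ker"
      then obtain k where S: "S = {u \<in> topspace (PT n). ipn n u k \<in> {0}}" by blast
      show "closedin (PT n) S" unfolding S
        by (rule closedin_continuous_map_preimage[OF cont_ipn[where k="\<lambda>_. k"]])
          (auto simp: continuous_map_const)
    qed
    have box2: "C2 \<subseteq> PiE {..<n} (\<lambda>_. {-1..1})"
    proof
      fix u assume u: "u \<in> C2"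
      hence "u \<in> PiE {..<n} (\<lambda>_. UNIV)" unfolding C2_def by (simp add: topspace_product_topology)
      moreover have "\<forall>j<n. \<bar>u j\<bar> \<le> 1" using u abs_le_ipn[of _ n u] unfolding C2_def by auto
      ultimately show "u \<in> PiE {..<n} (\<lambda>_. {-1..1})" by (auto simp: PiE_iff abs_le_iff)
    qed
    have inC2: "restrict (\<lambda>j. (1 / sqrt (ipn n u u)) * u j) {..<n} \<in> C2"
      if u: "ipn n u u > 0" "\<forall>k\<in>ker. ipn n u k = 0" for u
    proof -
      let ?s = "sqrt (ipn n u u)"
      let ?u = "restrict (\<lambda>j. (1 / ?s) * u j) {..<n}"
      have "ipn n ?u ?u = ipn n (\<lambda>j. (1 / ?s) * u j) (\<lambda>j. (1 / ?s) * u j)" by (rule ipn_cong) auto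
      also have "\<dots> = (1/?s) * ((1/?s) * ipn n u u)" by (simp only: ipn_scale ipn_scale2)
      also have "\<dots> = 1" using u(1) by (simp add: field_simps)
      finally have n1: "ipn n ?u ?u = 1" .
      have o: "ipn n ?u k = 0" if "k \<in> ker" for k
      proof -
        have "ipn n ?u k = ipn n (\<lambda>j. (1 / ?s) * u j) k" by (rule ipn_cong) auto
        also have "\<dots> = 0" unfolding ipn_scale using u(2) that by simp
        finally show ?thesis .
      qed
      show ?thesis unfolding C2_def using n1 o restrict_in_top by auto
    qed
    have qcont: "continuous_map (PT n) euclideanreal q" unfolding q_def
      using cont_q[OF finR, of n A "\<lambda>_. 0"] by simp
    have "C2 \<noteq> {}" using inC2[of d] dpos dorth unfolding ker_def by blast
    then obtain v where vC: "v \<in> C2" and vmin: "\<forall>u\<in>C2. q v \<le> q u"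
      using attain_min[OF qcont cl2 box2] by blast
    define lam where "lam = q v"
    have v1: "ipn n v v = 1" and vorth: "\<forall>k\<in>ker. ipn n v k = 0" using vC unfolding C2_def by auto
    have qnn: "q u \<ge> 0" for u unfolding q_def by (intro sum_nonneg) auto
    have ray: "lam * ipn n u u \<le> q u" if u: "\<forall>k\<in>ker. ipn n u k = 0" for u
    proof (cases "ipn n u u = 0")
      case True thus ?thesis using qnn by simp
    next
      case False
      hence up: "ipn n u u > 0" using ipn_nonneg[of n u] by simp
      let ?s = "sqrt (ipn n u u)"
      have "lam \<le> q (restrict (\<lambda>j. (1 / ?s) * u j) {..<n})"
        using vmin inC2[OF up u] unfolding lam_def by blast
      also have "\<dots> = q (\<lambda>j. (1 / ?s) * u j)" unfolding q_def
        by (intro sum.cong refl arg_cong[where f="\<lambda>x. x^2"] av_cong) auto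
      also have "\<dots> = q u / ipn n u u" unfolding q_def av_scale
        using up by (simp add: power_mult_distrib power_divide sum_divide_distrib)
      finally show ?thesis using up by (simp add: field_simps)
    qed
    define e where "e = (\<lambda>j. (\<Sum>r\<in>R. A r j * av A n v r) - lam * v j)"
    have eip: "ipn n e u = (\<Sum>r\<in>R. av A n v r * av A n u r) - lam * ipn n v u" for u
      unfolding e_def swap_av ipn_def by (simp add: algebra_simps sum_subtractf sum_distrib_left)
    have eu: "ipn n e u = 0" if u: "\<forall>k\<in>ker. ipn n u k = 0" for u
    proof -
      have "0 \<le> 2*t*(ipn n e u) + t^2*(q u - lam * ipn n u u)" for t
      proof -
        have "\<forall>k\<in>ker. ipn n (\<lambda>j. v j + t * u j) k = 0" using u vorth by (simp add: ipn_lin)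
        hence "lam * ipn n (\<lambda>j. v j + t * u j) (\<lambda>j. v j + t * u j) \<le> q (\<lambda>j. v j + t * u j)" by (rule ray)
        thus ?thesis unfolding ipn_sq q_def q_sq eip
          using v1 unfolding lam_def q_def by (simp add: algebra_simps)
      qed
      thus ?thesis by (intro quad_zero) blast
    qed
    have "ipn n e k = 0" if "k \<in> ker" for k
      using that vorth unfolding eip ker_def by simp
    hence "ipn n e e = 0" using eu[of e] by (simp add: ipn_sym)
    hence e0: "\<forall>j<n. e j = 0" using ipn_zero by blast
    have lpos: "lam > 0"
    proof -
      have "lam \<noteq> 0"
      proof
        assume "lam = 0"
        hence "\<forall>r\<in>R. (av A n v r)\<^sup>2 = 0" unfolding lam_def q_def
          using sum_nonneg_eq_0_iff[OF finR, of "\<lambda>r. (av A n v r)\<^sup>2"] by simp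
        hence "v \<in> ker" unfolding ker_def by simp
        with vorth v1 show False by force
      qed
      thus ?thesis using qnn[of v] unfolding lam_def by simp
    qed
    have vne: "\<exists>j<n. v j \<noteq> 0"
    proof (rule ccontr)
      assume "\<not> ?thesis" hence "ipn n v v = 0" unfolding ipn_def by simp
      with v1 show False by simp
    qed
    have eq: "\<forall>j<n. (\<Sum>r\<in>R. A r j * (\<Sum>k<n. A r k * v k)) = (sqrt lam)\<^sup>2 * v j"
      using e0 lpos unfolding e_def av_def by simp
    have sig: "sqrt lam \<in> nz_sing_vals R n A" unfolding nz_sing_vals_def
      using eq vne lpos by auto
    have ne: "nz_sing_vals R n A \<noteq> {}" using sig by blast
    have sm: "sigma_min R n A \<le> sqrt lam" unfolding sigma_min_def using sig fin_nz by simp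
    have smpos: "sigma_min R n A > 0" unfolding sigma_min_def
      using Min_in[OF fin_nz ne] unfolding nz_sing_vals_def by blast
    have "lam * ipn n d d \<le> q d" using ray dorth unfolding ker_def by blast
    hence "sqrt lam * sqrt (ipn n d d) \<le> sqrt (q d)" by (simp add: real_sqrt_mult[symmetric])
    moreover have "sigma_min R n A * sqrt (ipn n d d) \<le> sqrt lam * sqrt (ipn n d d)"
      using sm ipn_nonneg[of n d] by (intro mult_right_mono) auto
    ultimately show ?thesis using ne unfolding q_def by simp
  qed
  show ?thesis using dA part2 by blast
qed


lemma trimmed_set_fin: "finite {\<Lambda>. \<Lambda> \<subseteq> {..<m} \<and> card \<Lambda> = m - K}"
  by (rule finite_subset[of _ "Pow {..<m}"]) auto

lemma trimmed_set_ne: "{\<Lambda>. \<Lambda> \<subseteq> {..<m} \<and> card \<Lambda> = m - K} \<noteq> {}"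
proof -
  have "{..<m-K} \<in> {\<Lambda>. \<Lambda> \<subseteq> {..<m} \<and> card \<Lambda> = m - K}" by auto
  thus ?thesis by blast
qed

lemma trimmed_attained:
  "\<exists>\<Lambda>. \<Lambda> \<subseteq> {..<m} \<and> card \<Lambda> = m - K \<and> trimmed K m p z = (\<Sum>i\<in>\<Lambda>. block_norm p z i)"
proof -
  have "trimmed K m p z \<in> (\<lambda>\<Lambda>. \<Sum>i\<in>\<Lambda>. block_norm p z i) ` {\<Lambda>. \<Lambda> \<subseteq> {..<m} \<and> card \<Lambda> = m - K}"
    unfolding trimmed_def using trimmed_set_fin trimmed_set_ne by (intro Min_in) auto
  thus ?thesis by auto
qed

lemma trimmed_le:
  "\<Lambda> \<subseteq> {..<m} \<Longrightarrow> card \<Lambda> = m - K \<Longrightarrow> trimmed K m p z \<le> (\<Sum>i\<in>\<Lambda>. block_norm p z i)"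
  unfolding trimmed_def using trimmed_set_fin by (intro Min_le) auto

lemma block_norm_nonneg: "block_norm p z i \<ge> 0"
  unfolding block_norm_def by simp

lemma trimmed_nonneg: "trimmed K m p z \<ge> 0"
  using trimmed_attained[of m K p z] block_norm_nonneg by (metis sum_nonneg)

lemma trimmed_shrink:
  assumes L: "\<Lambda> \<subseteq> {..<m}" "card \<Lambda> = m - K" "trimmed K m p z = (\<Sum>i\<in>\<Lambda>. block_norm p z i)"
    and t: "0 \<le> t" "t \<le> 1"
    and z': "\<forall>i\<in>\<Lambda>. \<forall>k<p. z' (i*p+k) = (1-t) * z (i*p+k)"
  shows "trimmed K m p z' \<le> (1-t) * trimmed K m p z"
proof -
  have "trimmed K m p z' \<le> (\<Sum>i\<in>\<Lambda>. block_norm p z' i)" using trimmed_le L by blast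
  also have "\<dots> = (\<Sum>i\<in>\<Lambda>. (1-t) * block_norm p z i)"
  proof (rule sum.cong[OF refl])
    fix i assume i: "i \<in> \<Lambda>"
    have "block_norm p z' i = L2_set (\<lambda>k. (1-t) * z (i*p+k)) {..<p}"
      unfolding block_norm_def using z' i by (intro L2_set_cong) auto
    also have "\<dots> = (1-t) * block_norm p z i"
      unfolding block_norm_def using t by (simp add: L2_set_right_distrib)
    finally show "block_norm p z' i = (1-t) * block_norm p z i" .
  qed
  also have "\<dots> = (1-t) * trimmed K m p z" using L by (simp add: sum_distrib_left)
  finally show ?thesis .
qed

lemma block_rows_img: "block_rows p \<Lambda> = (\<lambda>(i,k). i*p+k) ` (\<Lambda> \<times> {..<p})"
  unfolding block_rows_def by auto

lemma block_rows_inj: "inj_on (\<lambda>(i,k). i*p+k) (\<Lambda> \<times> {..<(p::nat)})"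
proof (rule inj_onI, clarify)
  fix i k i' k' :: nat assume k: "k < p" "k' < p" and e: "i*p+k = i'*p+k'"
  have "(i*p+k) div p = i" "(i*p+k) mod p = k" using k by auto
  moreover have "(i'*p+k') div p = i'" "(i'*p+k') mod p = k'" using k by auto
  ultimately show "i = i' \<and> k = k'" using e by metis
qed

lemma block_rows_fin: "finite \<Lambda> \<Longrightarrow> finite (block_rows p \<Lambda>)"
  unfolding block_rows_img by simp

lemma Z_le:
  assumes fin: "finite \<Lambda>"
  shows "sqrt (\<Sum>r\<in>block_rows p \<Lambda>. (z r)\<^sup>2) \<le> (\<Sum>i\<in>\<Lambda>. block_norm p z i)"
proof -
  have "(\<Sum>r\<in>block_rows p \<Lambda>. (z r)\<^sup>2) = (\<Sum>(i,k)\<in>\<Lambda> \<times> {..<p}. (z (i*p+k))\<^sup>2)"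
    unfolding block_rows_img by (subst sum.reindex[OF block_rows_inj]) (simp add: case_prod_beta)
  also have "\<dots> = (\<Sum>i\<in>\<Lambda>. \<Sum>k<p. (z (i*p+k))\<^sup>2)"
    by (simp add: sum.cartesian_product)
  also have "\<dots> = (\<Sum>i\<in>\<Lambda>. (block_norm p z i)\<^sup>2)"
    unfolding block_norm_def L2_set_def by (intro sum.cong refl) (simp add: sum_nonneg)
  finally have "sqrt (\<Sum>r\<in>block_rows p \<Lambda>. (z r)\<^sup>2) = L2_set (block_norm p z) \<Lambda>"
    unfolding L2_set_def by simp
  also have "\<dots> \<le> (\<Sum>i\<in>\<Lambda>. block_norm p z i)" by (rule L2_set_le_sum) (simp add: block_norm_nonneg)
  finally show ?thesis .
qed

lemma resid_lin: "resid n D c (\<lambda>i. y i + t * dv i) r = resid n D c y r + t * av D n dv r"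
  unfolding resid_def av_def by (simp add: algebra_simps sum.distrib sum_distrib_left)

lemma resid_av: "resid n D c y r = av D n y r - c r"
  unfolding resid_def av_def by simp


lemma norm2_dir:
  assumes "l \<le> L" "0 \<le> t"
  shows "norm2_pt L n (diff_pt (\<lambda>l' i. x l' i + t * (if l' = l \<and> i < n l then dv i else 0)) x)
     = t * sqrt (ipn (n l) dv dv)"
proof -
  have "(\<Sum>l'\<le>L. \<Sum>i<n l'. (diff_pt (\<lambda>l' i. x l' i + t * (if l' = l \<and> i < n l then dv i else 0)) x l' i)\<^sup>2)
      = (\<Sum>l'\<le>L. if l' = l then t^2 * ipn (n l) dv dv else 0)"
  proof (rule sum.cong[OF refl])
    fix l' show "(\<Sum>i<n l'. (diff_pt (\<lambda>l' i. x l' i + t * (if l' = l \<and> i < n l then dv i else 0)) x l' i)\<^sup>2)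
      = (if l' = l then t^2 * ipn (n l) dv dv else 0)"
      unfolding diff_pt_def ipn_def
      by (auto simp: power_mult_distrib power2_eq_square sum_distrib_left intro!: sum.cong)
  qed
  also have "\<dots> = t^2 * ipn (n l) dv dv" using assms by simp
  finally show ?thesis unfolding norm2_pt_def using assms ipn_nonneg
    by (simp add: real_sqrt_mult)
qed

lemma norm1_dir:
  assumes "l \<le> L" "0 \<le> t"
  shows "norm1_pt L n (diff_pt (\<lambda>l' i. x l' i + t * (if l' = l \<and> i < n l then dv i else 0)) x)
     = t * (\<Sum>i<n l. \<bar>dv i\<bar>)"
proof -
  have "(\<Sum>l'\<le>L. \<Sum>i<n l'. \<bar>diff_pt (\<lambda>l' i. x l' i + t * (if l' = l \<and> i < n l then dv i else 0)) x l' i\<bar>)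
      = (\<Sum>l'\<le>L. if l' = l then t * (\<Sum>i<n l. \<bar>dv i\<bar>) else 0)"
  proof (rule sum.cong[OF refl])
    fix l' show "(\<Sum>i<n l'. \<bar>diff_pt (\<lambda>l' i. x l' i + t * (if l' = l \<and> i < n l then dv i else 0)) x l' i\<bar>)
      = (if l' = l then t * (\<Sum>i<n l. \<bar>dv i\<bar>) else 0)"
      unfolding diff_pt_def using assms(2)
      by (auto simp: abs_mult sum_distrib_left intro!: sum.cong)
  qed
  also have "\<dots> = t * (\<Sum>i<n l. \<bar>dv i\<bar>)" using assms by simp
  finally show ?thesis unfolding norm1_pt_def .
qed

lemma key:
  assumes ds: "d_stationary L n (objective L n m p K \<gamma> c D f) x"
    and l: "l \<in> {1..L}" and gpos: "\<gamma> l > 0"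
    and H1: "\<forall>t. 0 < t \<and> t \<le> 1 \<longrightarrow>
       trimmed (K l) (m l) (p l) (resid (n l) (D l) (c l) (\<lambda>i. x l i + t * dv i))
         \<le> (1-t) * trimmed (K l) (m l) (p l) (resid (n l) (D l) (c l) (x l))"
    and H2: "\<forall>t. 0 < t \<and> t \<le> 1 \<longrightarrow>
       f (\<lambda>l' i. x l' i + t * (if l' = l \<and> i < n l then dv i else 0)) - f x \<le> t * B"
  shows "\<gamma> l * trimmed (K l) (m l) (p l) (resid (n l) (D l) (c l) (x l)) \<le> B"
proof -
  define dir where "dir = (\<lambda>l' i. if l' = l \<and> i < n l then dv i else (0::real))"
  define F where "F = objective L n m p K \<gamma> c D f"
  define Tr where "Tr = (\<lambda>y. trimmed (K l) (m l) (p l) (resid (n l) (D l) (c l) y))"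
  have dirP: "dir \<in> point_space L n" unfolding point_space_def dir_def using l by auto
  obtain Dv where hd: "has_dir_deriv F x dir Dv" and Dv: "Dv \<ge> 0"
    using ds dirP unfolding d_stationary_def F_def by blast
  have bound: "(F (\<lambda>l' i. x l' i + t * dir l' i) - F x) / t \<le> B - \<gamma> l * Tr (x l)"
    if t: "0 < t" "t \<le> 1" for t
  proof -
    define x' where "x' = (\<lambda>l' i. x l' i + t * dir l' i)"
    have xl: "x' l' = x l'" if "l' \<noteq> l" for l' unfolding x'_def dir_def using that by auto
    have rl: "resid (n l) (D l) (c l) (x' l) = resid (n l) (D l) (c l) (\<lambda>i. x l i + t * dv i)"
      unfolding resid_def x'_def dir_def by (intro ext sum.cong refl) auto
    let ?g = "\<lambda>y l'. \<gamma> l' * trimmed (K l') (m l') (p l') (resid (n l') (D l') (c l') (y l'))"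
    have fin: "finite {1..L}" by simp
    have "(\<Sum>l'=1..L. ?g x' l') = ?g x' l + (\<Sum>l'\<in>{1..L}-{l}. ?g x' l')"
      using sum.remove[OF fin l] by blast
    also have "(\<Sum>l'\<in>{1..L}-{l}. ?g x' l') = (\<Sum>l'\<in>{1..L}-{l}. ?g x l')"
      using xl by (intro sum.cong refl) auto
    finally have s1: "(\<Sum>l'=1..L. ?g x' l') = ?g x' l + (\<Sum>l'\<in>{1..L}-{l}. ?g x l')" .
    have s2: "(\<Sum>l'=1..L. ?g x l') = ?g x l + (\<Sum>l'\<in>{1..L}-{l}. ?g x l')"
      using sum.remove[OF fin l] by blast
    have "F x' - F x = (f x' - f x) + (?g x' l - ?g x l)"
      unfolding F_def objective_def s1 s2 by simp
    also have "?g x' l = \<gamma> l * Tr (\<lambda>i. x l i + t * dv i)" unfolding Tr_def rl ..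
    also have "\<dots> \<le> \<gamma> l * ((1-t) * Tr (x l))" using H1 t gpos unfolding Tr_def
      by (intro mult_left_mono) auto
    also have "f x' - f x \<le> t * B" using H2 t unfolding x'_def dir_def by blast
    finally have "F x' - F x \<le> t * B + (\<gamma> l * ((1 - t) * Tr (x l)) - \<gamma> l * Tr (x l))"
      unfolding Tr_def by simp
    also have "\<dots> = t * (B - \<gamma> l * Tr (x l))" by (simp add: algebra_simps)
    finally show ?thesis unfolding x'_def using t by (simp add: divide_le_eq mult.commute)
  qed
  have lim: "((\<lambda>t. (F (\<lambda>l i. x l i + t * dir l i) - F x) / t) \<longlongrightarrow> Dv) (at_right 0)"
    using hd unfolding has_dir_deriv_def .
  have ev: "\<forall>\<^sub>F t in at_right 0. (F (\<lambda>l i. x l i + t * dir l i) - F x) / t \<le> B - \<gamma> l * Tr (x l)"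
    using eventually_at_right_real[of 0 1] by (rule eventually_mono) (auto intro: bound)
  have "Dv \<le> B - \<gamma> l * Tr (x l)"
    by (rule tendsto_upperbound[OF lim ev trivial_limit_at_right_real])
  thus ?thesis using Dv unfolding Tr_def by simp
qed


lemma nzne: "finite R \<Longrightarrow> r \<in> R \<Longrightarrow> j < n \<Longrightarrow> A r j \<noteq> 0 \<Longrightarrow> nz_sing_vals R n A \<noteq> {}"
proof -
  assume fin: "finite R" and r: "r \<in> R" and j: "j < n" and a: "A r j \<noteq> 0"
  have "av A n (\<lambda>i. if i = j then 1 else 0) r = A r j" unfolding av_def using j
    by (simp add: if_distrib cong: if_cong)
  thus ?thesis using LA[OF fin, of A n "\<lambda>i. if i = j then 1 else 0"] r a by auto
qed

lemma smpos: "nz_sing_vals R n A \<noteq> {} \<Longrightarrow> sigma_min R n A > 0"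
  unfolding sigma_min_def using Min_in[OF fin_nz] unfolding nz_sing_vals_def by blast

lemma sum_if_sq: "R \<subseteq> A \<Longrightarrow> finite A \<Longrightarrow>
  (\<Sum>r\<in>A. (if r \<in> R then g r else (0::real))\<^sup>2) = (\<Sum>r\<in>R. (g r)\<^sup>2)"
proof -
  assume "R \<subseteq> A" "finite A"
  have "(\<Sum>r\<in>A. (if r \<in> R then g r else (0::real))\<^sup>2) = (\<Sum>r\<in>A. if r \<in> R then (g r)\<^sup>2 else 0)"
    by (intro sum.cong) auto
  also have "\<dots> = (\<Sum>r\<in>A \<inter> R. (g r)\<^sup>2)" using \<open>finite A\<close> by (simp add: sum.inter_restrict)
  also have "A \<inter> R = R" using \<open>R \<subseteq> A\<close> by blast
  finally show ?thesis .
qed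


lemma part1:
  assumes gamma_pos: "\<forall>l\<in>{1..L}. \<gamma> l > 0"
    and D_nonzero: "\<forall>l\<in>{1..L}. \<exists>r<m l * p l. \<exists>j<n l. D l r j \<noteq> 0"
    and f_lip: "\<forall>x\<in>point_space L n. \<forall>y\<in>point_space L n.
                  \<bar>f x - f y\<bar> \<le> M * norm2_pt L n (diff_pt x y)"
    and feasible: "\<forall>l\<in>{1..L}. \<exists>xb. \<forall>r<m l * p l. (\<Sum>j<n l. D l r j * xb j) = c l r"
    and ds: "d_stationary L n (objective L n m p K \<gamma> c D f) xs"
    and thr: "\<forall>l\<in>{1..L}. \<gamma> l > M / sigma_K (K l) (m l) (p l) (n l) (D l)"
    and l: "l \<in> {1..L}"
  shows "trimmed (K l) (m l) (p l) (resid (n l) (D l) (c l) (xs l)) = 0"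
proof (rule ccontr)
  let ?z = "resid (n l) (D l) (c l) (xs l)"
  let ?T = "trimmed (K l) (m l) (p l) ?z"
  let ?\<sigma> = "sigma_K (K l) (m l) (p l) (n l) (D l)"
  assume "?T \<noteq> 0"
  hence Tpos: "?T > 0" using trimmed_nonneg[of "K l" "m l" "p l" ?z] by simp
  have xsP: "xs \<in> point_space L n" using ds unfolding d_stationary_def by blast
  obtain \<Lambda> where \<Lambda>: "\<Lambda> \<subseteq> {..<m l}" "card \<Lambda> = m l - K l" "?T = (\<Sum>i\<in>\<Lambda>. block_norm (p l) ?z i)"
    using trimmed_attained by blast
  have finL: "finite \<Lambda>" using \<Lambda>(1) finite_subset by blast
  obtain r0 j0 where r0: "r0 < m l * p l" and j0: "j0 < n l" and Dr0: "D l r0 j0 \<noteq> 0"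
    using D_nonzero l by blast
  define R where "R = block_rows (p l) \<Lambda>"
  have finR: "finite R" unfolding R_def using finL by (rule block_rows_fin)
  have Rsub: "R \<subseteq> {..<m l * p l}"
  proof
    fix r assume "r \<in> R"
    then obtain i k where i: "i \<in> \<Lambda>" and k: "k < p l" and r: "r = i * p l + k"
      unfolding R_def block_rows_def by blast
    have "i < m l" using i \<Lambda>(1) by auto
    hence "Suc i \<le> m l" by simp
    hence "Suc i * p l \<le> m l * p l" by (rule mult_right_mono) simp
    thus "r \<in> {..<m l * p l}" using r k by simp
  qed
  have zR: "\<exists>r\<in>R. ?z r \<noteq> 0"
  proof (rule ccontr)
    assume "\<not> ?thesis"
    hence z0: "\<forall>i\<in>\<Lambda>. \<forall>k<p l. ?z (i * p l + k) = 0" unfolding R_def block_rows_def by blast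
    have "\<forall>i\<in>\<Lambda>. block_norm (p l) ?z i = 0" unfolding block_norm_def L2_set_def
      using z0 by simp
    hence "?T = 0" using \<Lambda>(3) by simp
    with Tpos show False by simp
  qed
  define Z where "Z = sqrt (\<Sum>r\<in>R. (?z r)\<^sup>2)"
  have ZT: "Z \<le> ?T" unfolding Z_def R_def \<Lambda>(3) by (rule Z_le[OF finL])
  obtain xb where xb: "\<forall>r<m l * p l. (\<Sum>j<n l. D l r j * xb j) = c l r" using feasible l by blast
  define w where "w = (\<lambda>j. xb j + (-1) * xs l j)"
  have aw: "av (D l) (n l) w r = - ?z r" if "r < m l * p l" for r
    unfolding w_def av_lin resid_av using xb that unfolding av_def by simp
  obtain dv where dvA: "\<forall>r\<in>R. av (D l) (n l) dv r = - ?z r"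
    and sgp: "?\<sigma> > 0" and sgb: "?\<sigma> * sqrt (ipn (n l) dv dv) \<le> Z"
  proof (cases "mat_surj (m l * p l) (n l) (D l)")
    case True
    hence sK: "?\<sigma> = sigma_min {..<m l * p l} (n l) (D l)" unfolding sigma_K_def by simp
    define y where "y = (\<lambda>r. if r \<in> R then - ?z r else 0)"
    obtain v where v: "\<forall>r<m l * p l. (\<Sum>j<n l. D l r j * v j) = y r"
      using True unfolding mat_surj_def by blast
    have av: "av (D l) (n l) v r = y r" if "r \<in> {..<m l * p l}" for r
      using v that unfolding av_def by simp
    obtain d where dA: "\<forall>r\<in>{..<m l * p l}. av (D l) (n l) d r = av (D l) (n l) v r"
      and dB: "(\<exists>r\<in>{..<m l * p l}. av (D l) (n l) v r \<noteq> 0) \<longrightarrow>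
         nz_sing_vals {..<m l * p l} (n l) (D l) \<noteq> {} \<and>
         sigma_min {..<m l * p l} (n l) (D l) * sqrt (ipn (n l) d d)
           \<le> sqrt (\<Sum>r\<in>{..<m l * p l}. (av (D l) (n l) d r)\<^sup>2)"
      using LA[of "{..<m l * p l}" "D l" "n l" v] by blast
    have ex: "\<exists>r\<in>{..<m l * p l}. av (D l) (n l) v r \<noteq> 0"
      using zR Rsub av unfolding y_def by force
    have "(\<Sum>r\<in>{..<m l * p l}. (av (D l) (n l) d r)\<^sup>2) = (\<Sum>r\<in>{..<m l * p l}. (y r)\<^sup>2)"
      using dA av by (intro sum.cong) auto
    also have "\<dots> = (\<Sum>r\<in>R. (- ?z r)\<^sup>2)" unfolding y_def by (rule sum_if_sq[OF Rsub]) simp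
    finally have eqZ: "sqrt (\<Sum>r\<in>{..<m l * p l}. (av (D l) (n l) d r)\<^sup>2) = Z" unfolding Z_def by simp
    show ?thesis
    proof (rule that[of d])
      show "\<forall>r\<in>R. av (D l) (n l) d r = - ?z r" using dA av Rsub unfolding y_def by auto
      show "?\<sigma> > 0" unfolding sK using dB ex smpos by blast
      show "?\<sigma> * sqrt (ipn (n l) d d) \<le> Z" unfolding sK using dB ex eqZ by simp
    qed
  next
    case False
    define S where "S = {sigma_min (block_rows (p l) \<Lambda>') (n l) (D l) | \<Lambda>'.
                  \<Lambda>' \<subseteq> {..<m l} \<and> card \<Lambda>' = m l - K l \<and>
                  (\<exists>r\<in>block_rows (p l) \<Lambda>'. \<exists>j<n l. D l r j \<noteq> 0)}"
    have sK: "?\<sigma> = Min S" unfolding sigma_K_def S_def by (rule if_not_P[OF False])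
    obtain d where dA: "\<forall>r\<in>R. av (D l) (n l) d r = av (D l) (n l) w r"
      and dB: "(\<exists>r\<in>R. av (D l) (n l) w r \<noteq> 0) \<longrightarrow>
         nz_sing_vals R (n l) (D l) \<noteq> {} \<and>
         sigma_min R (n l) (D l) * sqrt (ipn (n l) d d) \<le> sqrt (\<Sum>r\<in>R. (av (D l) (n l) d r)\<^sup>2)"
      using LA[OF finR, of "D l" "n l" w] by blast
    have awR: "\<forall>r\<in>R. av (D l) (n l) w r = - ?z r" using aw Rsub by auto
    have ex: "\<exists>r\<in>R. av (D l) (n l) w r \<noteq> 0" using zR awR by auto
    have "(\<Sum>r\<in>R. (av (D l) (n l) d r)\<^sup>2) = (\<Sum>r\<in>R. (?z r)\<^sup>2)"
      using dA awR by (intro sum.cong refl) auto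
    hence eqZ: "sqrt (\<Sum>r\<in>R. (av (D l) (n l) d r)\<^sup>2) = Z" unfolding Z_def by simp
    have nzD: "\<exists>r\<in>R. \<exists>j<n l. D l r j \<noteq> 0"
    proof -
      obtain r where r: "r \<in> R" "av (D l) (n l) w r \<noteq> 0" using ex by blast
      have "(\<Sum>j<n l. D l r j * w j) \<noteq> 0" using r(2) unfolding av_def by simp
      then obtain j where "j \<in> {..<n l}" "D l r j * w j \<noteq> 0"
        using sum.not_neutral_contains_not_neutral by blast
      thus ?thesis using r by auto
    qed
    have inS: "sigma_min R (n l) (D l) \<in> S" unfolding S_def mem_Collect_eq
      by (rule exI[of _ \<Lambda>]) (use \<Lambda>(1,2) nzD in \<open>simp add: R_def\<close>)
    have finS: "finite S"
    proof (rule finite_subset)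
      show "S \<subseteq> (\<lambda>\<Lambda>'. sigma_min (block_rows (p l) \<Lambda>') (n l) (D l)) ` Pow {..<m l}"
        unfolding S_def by auto
    qed simp
    have Spos: "\<forall>s\<in>S. s > 0"
    proof
      fix s assume "s \<in> S"
      then obtain \<Lambda>' where s: "s = sigma_min (block_rows (p l) \<Lambda>') (n l) (D l)"
        and L': "\<Lambda>' \<subseteq> {..<m l}" and nz': "\<exists>r\<in>block_rows (p l) \<Lambda>'. \<exists>j<n l. D l r j \<noteq> 0"
        unfolding S_def by blast
      have "finite \<Lambda>'" using L' finite_lessThan by (rule finite_subset)
      hence fb: "finite (block_rows (p l) \<Lambda>')" by (rule block_rows_fin)
      obtain r j where rj: "r \<in> block_rows (p l) \<Lambda>'" "j < n l" "D l r j \<noteq> 0" using nz' by blast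
      show "s > 0" unfolding s by (rule smpos[OF nzne[where A="D l", OF fb rj]])
    qed
    have le: "?\<sigma> \<le> sigma_min R (n l) (D l)" unfolding sK using finS inS by simp
    have pos: "?\<sigma> > 0" unfolding sK using Min_in[OF finS] inS Spos by blast
    show ?thesis
    proof (rule that[of d])
      show "\<forall>r\<in>R. av (D l) (n l) d r = - ?z r" using dA awR by auto
      show "?\<sigma> > 0" by (rule pos)
      have "?\<sigma> * sqrt (ipn (n l) d d) \<le> sigma_min R (n l) (D l) * sqrt (ipn (n l) d d)"
        using le ipn_nonneg[of "n l" d] by (intro mult_right_mono) auto
      also have "\<dots> \<le> Z" using dB ex eqZ by simp
      finally show "?\<sigma> * sqrt (ipn (n l) d d) \<le> Z" .
    qed
  qed
  define x' where "x' = (\<lambda>t l' i. xs l' i + t * (if l' = l \<and> i < n l then dv i else 0))"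
  have x'P: "x' t \<in> point_space L n" for t
    using xsP l unfolding point_space_def x'_def by auto
  have lL: "l \<le> L" using l by simp
  have key1: "\<gamma> l * ?T \<le> M * sqrt (ipn (n l) dv dv)"
  proof (rule key[OF ds l])
    show "\<gamma> l > 0" using gamma_pos l by blast
    show "\<forall>t. 0 < t \<and> t \<le> 1 \<longrightarrow>
       trimmed (K l) (m l) (p l) (resid (n l) (D l) (c l) (\<lambda>i. xs l i + t * dv i)) \<le> (1-t) * ?T"
    proof (intro allI impI)
      fix t :: real assume t: "0 < t \<and> t \<le> 1"
      show "trimmed (K l) (m l) (p l) (resid (n l) (D l) (c l) (\<lambda>i. xs l i + t * dv i)) \<le> (1-t) * ?T"
      proof (rule trimmed_shrink[OF \<Lambda>])
        show "0 \<le> t" "t \<le> 1" using t by auto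
        show "\<forall>i\<in>\<Lambda>. \<forall>k<p l. resid (n l) (D l) (c l) (\<lambda>i. xs l i + t * dv i) (i * p l + k) =
            (1 - t) * ?z (i * p l + k)"
        proof (intro ballI allI impI)
          fix i k assume i: "i \<in> \<Lambda>" and k: "k < p l"
          have "i * p l + k \<in> R" unfolding R_def block_rows_def using i k by blast
          thus "resid (n l) (D l) (c l) (\<lambda>i. xs l i + t * dv i) (i * p l + k) = (1 - t) * ?z (i * p l + k)"
            unfolding resid_lin using dvA by (simp add: algebra_simps)
        qed
      qed
    qed
    show "\<forall>t. 0 < t \<and> t \<le> 1 \<longrightarrow>
       f (\<lambda>l' i. xs l' i + t * (if l' = l \<and> i < n l then dv i else 0)) - f xs \<le> t * (M * sqrt (ipn (n l) dv dv))"
    proof (intro allI impI)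
      fix t :: real assume t: "0 < t \<and> t \<le> 1"
      have "f (x' t) - f xs \<le> \<bar>f (x' t) - f xs\<bar>" by simp
      also have "\<dots> \<le> M * norm2_pt L n (diff_pt (x' t) xs)" using f_lip x'P xsP by blast
      also have "norm2_pt L n (diff_pt (x' t) xs) = t * sqrt (ipn (n l) dv dv)"
        unfolding x'_def using norm2_dir[OF lL] t by simp
      finally show "f (\<lambda>l' i. xs l' i + t * (if l' = l \<and> i < n l then dv i else 0)) - f xs \<le> t * (M * sqrt (ipn (n l) dv dv))"
        unfolding x'_def by (simp add: algebra_simps)
    qed
  qed
  have Mnn: "M \<ge> 0"
  proof -
    define e where "e = (\<lambda>i. if i = j0 then (1::real) else 0)"
    define p1 where "p1 = (\<lambda>l' i. (0::real) + 1 * (if l' = l \<and> i < n l then e i else 0))"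
    have P0: "(\<lambda>_ _. 0) \<in> point_space L n" unfolding point_space_def by simp
    have P1: "p1 \<in> point_space L n" unfolding point_space_def p1_def using l by auto
    have ie: "ipn (n l) e e = 1" unfolding ipn_def e_def using j0
      by (simp add: if_distrib cong: if_cong)
    have "norm2_pt L n (diff_pt p1 (\<lambda>_ _. 0)) = 1"
      unfolding p1_def using norm2_dir[OF lL, of 1 n "\<lambda>_ _. 0" e] ie by simp
    hence "\<bar>f p1 - f (\<lambda>_ _. 0)\<bar> \<le> M" using f_lip P0 P1 by force
    thus ?thesis by simp
  qed
  define nd where "nd = sqrt (ipn (n l) dv dv)"
  have g: "\<gamma> l > M / ?\<sigma>" using thr l by blast
  hence g2: "\<gamma> l * ?\<sigma> > M" using sgp by (simp add: divide_less_eq)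
  have a1: "?\<sigma> * nd \<le> ?T" using sgb ZT unfolding nd_def by simp
  have "\<gamma> l * ?T * ?\<sigma> \<le> M * nd * ?\<sigma>" using key1 sgp unfolding nd_def by (intro mult_right_mono) auto
  also have "\<dots> = M * (?\<sigma> * nd)" by simp
  also have "\<dots> \<le> M * ?T" using a1 Mnn by (intro mult_left_mono) auto
  also have "\<dots> < \<gamma> l * ?\<sigma> * ?T" using g2 Tpos by (intro mult_strict_right_mono) auto
  finally show False by (simp add: algebra_simps)
qed


lemma part2:
  assumes gamma_pos: "\<forall>l\<in>{1..L}. \<gamma> l > 0"
    and struct: "\<forall>l\<in>{1..L}. p l = 1 \<and> n l = m l \<and>
                (\<forall>r<m l. \<forall>j<n l. D l r j = (if r = j then 1 else 0)) \<and>
                (\<forall>r<m l. c l r = 0)"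
    and f_lip: "\<forall>x\<in>point_space L n. \<forall>y\<in>point_space L n.
                  \<bar>f x - f y\<bar> \<le> M' * norm1_pt L n (diff_pt x y)"
    and ds: "d_stationary L n (objective L n m p K \<gamma> c D f) xs"
    and thr: "\<forall>l\<in>{1..L}. \<gamma> l > M'"
    and l: "l \<in> {1..L}"
  shows "trimmed (K l) (m l) (p l) (resid (n l) (D l) (c l) (xs l)) = 0"
proof (rule ccontr)
  let ?z = "resid (n l) (D l) (c l) (xs l)"
  let ?T = "trimmed (K l) (m l) (p l) ?z"
  assume "?T \<noteq> 0"
  hence Tpos: "?T > 0" using trimmed_nonneg[of "K l" "m l" "p l" ?z] by simp
  have xsP: "xs \<in> point_space L n" using ds unfolding d_stationary_def by blast
  have p1: "p l = 1" and nm: "n l = m l" and Did: "\<forall>r<m l. \<forall>j<n l. D l r j = (if r = j then 1 else 0)"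
    and c0: "\<forall>r<m l. c l r = 0" using struct l by auto
  have rid: "resid (n l) (D l) (c l) y r = y r" if r: "r < m l" for y r
  proof -
    have "resid (n l) (D l) (c l) y r = (\<Sum>j<n l. (if r = j then 1 else 0) * y j) - 0"
      unfolding resid_def using Did c0 r by (intro arg_cong2[where f="(-)"] sum.cong) auto
    also have "\<dots> = (\<Sum>j<n l. if r = j then y j else 0)" unfolding diff_zero by (intro sum.cong) auto
    also have "\<dots> = y r" using r nm by simp
    finally show ?thesis .
  qed
  have bn: "block_norm 1 z i = \<bar>z i\<bar>" for z i
    unfolding block_norm_def L2_set_def by (simp add: lessThan_Suc)
  obtain \<Lambda> where \<Lambda>: "\<Lambda> \<subseteq> {..<m l}" "card \<Lambda> = m l - K l" "?T = (\<Sum>i\<in>\<Lambda>. block_norm (p l) ?z i)"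
    using trimmed_attained by blast
  have finL: "finite \<Lambda>" using \<Lambda>(1) finite_lessThan by (rule finite_subset)
  have TS: "?T = (\<Sum>i\<in>\<Lambda>. \<bar>xs l i\<bar>)"
  proof -
    have "?T = (\<Sum>i\<in>\<Lambda>. block_norm (p l) ?z i)" by (rule \<Lambda>(3))
    also have "\<dots> = (\<Sum>i\<in>\<Lambda>. \<bar>xs l i\<bar>)" unfolding p1 bn
      using \<Lambda>(1) rid by (intro sum.cong refl) auto
    finally show ?thesis .
  qed
  define dv where "dv = (\<lambda>i. if i \<in> \<Lambda> then - xs l i else 0)"
  define x' where "x' = (\<lambda>t l' i. xs l' i + t * (if l' = l \<and> i < n l then dv i else 0))"
  have x'P: "x' t \<in> point_space L n" for t
    using xsP l unfolding point_space_def x'_def by auto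
  have lL: "l \<le> L" using l by simp
  have sdv: "(\<Sum>i<n l. \<bar>dv i\<bar>) = (\<Sum>i\<in>\<Lambda>. \<bar>xs l i\<bar>)"
  proof -
    have "(\<Sum>i<n l. \<bar>dv i\<bar>) = (\<Sum>i<n l. if i \<in> \<Lambda> then \<bar>xs l i\<bar> else 0)"
      unfolding dv_def by (intro sum.cong refl) auto
    also have "\<dots> = (\<Sum>i\<in>{..<n l} \<inter> \<Lambda>. \<bar>xs l i\<bar>)" by (simp add: sum.inter_restrict)
    also have "{..<n l} \<inter> \<Lambda> = \<Lambda>" using \<Lambda>(1) nm by auto
    finally show ?thesis .
  qed
  have key1: "\<gamma> l * ?T \<le> M' * ?T"
  proof (rule key[OF ds l])
    show "\<gamma> l > 0" using gamma_pos l by blast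
    show "\<forall>t. 0 < t \<and> t \<le> 1 \<longrightarrow>
       trimmed (K l) (m l) (p l) (resid (n l) (D l) (c l) (\<lambda>i. xs l i + t * dv i)) \<le> (1-t) * ?T"
    proof (intro allI impI)
      fix t :: real assume t: "0 < t \<and> t \<le> 1"
      show "trimmed (K l) (m l) (p l) (resid (n l) (D l) (c l) (\<lambda>i. xs l i + t * dv i)) \<le> (1-t) * ?T"
      proof (rule trimmed_shrink[OF \<Lambda>])
        show "0 \<le> t" "t \<le> 1" using t by auto
        show "\<forall>i\<in>\<Lambda>. \<forall>k<p l. resid (n l) (D l) (c l) (\<lambda>i. xs l i + t * dv i) (i * p l + k) =
            (1 - t) * ?z (i * p l + k)"
        proof (intro ballI allI impI)
          fix i k assume i: "i \<in> \<Lambda>" and k: "k < p l"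
          have k0: "k = 0" using k p1 by simp
          have im: "i < m l" using i \<Lambda>(1) by auto
          show "resid (n l) (D l) (c l) (\<lambda>i. xs l i + t * dv i) (i * p l + k) = (1 - t) * ?z (i * p l + k)"
            unfolding k0 p1 using rid[OF im] i unfolding dv_def by (simp add: algebra_simps)
        qed
      qed
    qed
    show "\<forall>t. 0 < t \<and> t \<le> 1 \<longrightarrow>
       f (\<lambda>l' i. xs l' i + t * (if l' = l \<and> i < n l then dv i else 0)) - f xs \<le> t * (M' * ?T)"
    proof (intro allI impI)
      fix t :: real assume t: "0 < t \<and> t \<le> 1"
      have "f (x' t) - f xs \<le> \<bar>f (x' t) - f xs\<bar>" by simp
      also have "\<dots> \<le> M' * norm1_pt L n (diff_pt (x' t) xs)" using f_lip x'P xsP by blast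
      also have "norm1_pt L n (diff_pt (x' t) xs) = t * ?T"
        unfolding x'_def using norm1_dir[OF lL] t sdv TS by simp
      finally show "f (\<lambda>l' i. xs l' i + t * (if l' = l \<and> i < n l then dv i else 0)) - f xs \<le> t * (M' * ?T)"
        unfolding x'_def by (simp add: algebra_simps)
    qed
  qed
  have "M' * ?T < \<gamma> l * ?T" using thr l Tpos by (intro mult_strict_right_mono) auto
  with key1 show False by simp
qed

theorem mainTheorem6:
  fixes L :: nat and n m p K :: "nat \<Rightarrow> nat"
    and \<gamma> :: "nat \<Rightarrow> real" and c :: "nat \<Rightarrow> nat \<Rightarrow> real"
    and D :: "nat \<Rightarrow> nat \<Rightarrow> nat \<Rightarrow> real"
    and f :: "(nat \<Rightarrow> nat \<Rightarrow> real) \<Rightarrow> real" and M :: real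
  assumes gamma_pos: "\<forall>l\<in>{1..L}. \<gamma> l > 0"
    and K_range: "\<forall>l\<in>{1..L}. K l < m l"
    and D_nonzero: "\<forall>l\<in>{1..L}. \<exists>r<m l * p l. \<exists>j<n l. D l r j \<noteq> 0"
    and f_dd: "dir_differentiable L n f"
    and f_lip: "\<forall>x\<in>point_space L n. \<forall>y\<in>point_space L n.
                  \<bar>f x - f y\<bar> \<le> M * norm2_pt L n (diff_pt x y)"
    and feasible: "\<forall>l\<in>{1..L}. \<exists>xb. \<forall>r<m l * p l. (\<Sum>j<n l. D l r j * xb j) = c l r"
  shows "(\<forall>xs. d_stationary L n (objective L n m p K \<gamma> c D f) xs \<and>
              (\<forall>l\<in>{1..L}. \<gamma> l > M / sigma_K (K l) (m l) (p l) (n l) (D l))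
            \<longrightarrow> (\<forall>l\<in>{1..L}. trimmed (K l) (m l) (p l) (resid (n l) (D l) (c l) (xs l)) = 0))
       \<and> (\<forall>M'::real.
            (\<forall>l\<in>{1..L}. p l = 1 \<and> n l = m l \<and>
                (\<forall>r<m l. \<forall>j<n l. D l r j = (if r = j then 1 else 0)) \<and>
                (\<forall>r<m l. c l r = 0)) \<and>
            (\<forall>x\<in>point_space L n. \<forall>y\<in>point_space L n.
                  \<bar>f x - f y\<bar> \<le> M' * norm1_pt L n (diff_pt x y))
            \<longrightarrow> (\<forall>xs. d_stationary L n (objective L n m p K \<gamma> c D f) xs \<and>
                    (\<forall>l\<in>{1..L}. \<gamma> l > M')
                  \<longrightarrow> (\<forall>l\<in>{1..L}. trimmed (K l) (m l) (p l) (resid (n l) (D l) (c l) (xs l)) = 0)))"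
proof (intro conjI allI impI ballI)
  fix xs l
  assume A: "d_stationary L n (objective L n m p K \<gamma> c D f) xs \<and>
              (\<forall>l\<in>{1..L}. \<gamma> l > M / sigma_K (K l) (m l) (p l) (n l) (D l))"
    and l: "l \<in> {1..L}"
  show "trimmed (K l) (m l) (p l) (resid (n l) (D l) (c l) (xs l)) = 0"
    using part1[OF gamma_pos D_nonzero f_lip feasible _ _ l] A by blast
next
  fix M' :: real and xs l
  assume B: "(\<forall>l\<in>{1..L}. p l = 1 \<and> n l = m l \<and>
                (\<forall>r<m l. \<forall>j<n l. D l r j = (if r = j then 1 else 0)) \<and>
                (\<forall>r<m l. c l r = 0)) \<and>
            (\<forall>x\<in>point_space L n. \<forall>y\<in>point_space L n.
                  \<bar>f x - f y\<bar> \<le> M' * norm1_pt L n (diff_pt x y))"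
    and C: "d_stationary L n (objective L n m p K \<gamma> c D f) xs \<and> (\<forall>l\<in>{1..L}. \<gamma> l > M')"
    and l: "l \<in> {1..L}"
  show "trimmed (K l) (m l) (p l) (resid (n l) (D l) (c l) (xs l)) = 0"
    using part2[OF gamma_pos _ _ _ _ l] B C by blast
qed


end
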